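(* In the polarized setting below, for $t\in H^0$ let $D(t):V_w\to V_w$ be multiplication by $t$, and for $0\le p\le w-1$ write $D(t)|_{H^p}=D^-_p(t)+D^0_p(t)+D^+_p(t)$ with $D^-_p(t)\in\mathrm{Hom}(H^p,H^{p-1})$, $D^0_p(t)\in\mathrm{Hom}(H^p,H^p)$, $D^+_p(t)\in\mathrm{Hom}(H^p,H^{p+1})$ (where $D^-_0(t)=0$, $D^+_{w-1}(t)=0$); set $D^{\pm}(t)=\sum_pD^{\pm}_p(t)$, $D^0(t)=\sum_pD^0_p(t)$ as endomorphisms of $V_w$. Then $D(t)=D^-(t)+D^0(t)+D^+(t)$ on $V_w$, $D^0(t)$ preserves the grading $V_w=\bigoplus_{p=0}^{w-1}H^p$ and $D^{\pm}(t)$ shift it by $\pm1$, and for all $t,t'\in H^0$: (i) $D^+(t)D^+(t')=D^+(t')D^+(t)$ and $D^-(t)D^-(t')=D^-(t')D^-(t)$; (ii) $D^0(t)D^{\pm}(t')+D^{\pm}(t)D^0(t')=D^0(t')D^{\pm}(t)+D^{\pm}(t')D^0(t)$; (iii) $D^0(t)D^0(t')-D^0(t')D^0(t)+D^+(t)D^-(t')-D^+(t')D^-(t)+D^-(t)D^+(t')-D^-(t')D^+(t)=0$. (Equivalently, writing $D,D^0,D^{\pm}:V_w\to (H^0)^*\otimes V_w$: $D\wedge D=0$, $D^{\pm}\wedge D^{\pm}=0$, $D^0\wedge D^{\pm}+D^{\pm}\wedge D^0=0$, $D^0\wedge D^0+D^+\wedge D^-+D^-\wedge D^+=0$.)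
   Context: Polarized setting. Let $X$ be a smooth complex projective variety of dimension $n\ge2$ with canonical divisor $K_X$, $\mathcal E$ a rank $n$ holomorphic vector bundle with $\mathcal O_X(L)=\det\mathcal E$ and $H^i(\mathcal O_X(-L))=0$ for $i\le n-1$. Let $e\in H^0(\mathcal E)$ be a section whose zero scheme $Z=Z_e$ is a finite set of $d$ distinct reduced points. Put $A=H^0(\mathcal O_Z)$ and $E_Z=\mathrm{Ext}^{n-1}(\mathcal I_Z(L),\mathcal O_X)$, viewed via Serre duality $E_Z\cong H^1(\mathcal I_Z(L+K_X))^*$ and dualizing the surjection $H^0(\mathcal O_Z(L+K_X))\to H^1(\mathcal I_Z(L+K_X))$ as a subspace of $H^0(\mathcal O_Z(L+K_X))^*\cong H^0(\omega_Z\otimes\mathcal O_X(-L-K_X))$, sections of an invertible sheaf on $Z$. An element $\alpha\in E_Z$ is regular if $f\mapsto f\alpha$ is an isomorphism $A\to H^0(\mathcal O_Z(L+K_X))^*$ (i.e. $\alpha$ vanishes at no point of $Z$). For regular $\alpha$ put $V_1=\{\beta/\alpha:\beta\in E_Z\}\subset A$ (it contains $1$), let $V_k$ be the span of all products of $k$ elements of $V_1$ (so $V_1\subset V_2\subset\cdots$), $V_0=0$, and let $w\ge1$ be the least integer with $V_k=V_w$ for all $k\ge w$. Let $q(f,g)=\sum_{z\in Z}f(z)g(z)$ be the trace form on $A$; $\alpha$ is polarizing if it is regular and $q|_{V_k}$ is non-degenerate for all $k\ge1$. For polarizing $\alpha$ define $H^p=V_p^{\perp}\cap V_{p+1}$ for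 $0\le p\le w-1$ and $H^w=V_w^{\perp}$, orthogonal complements taken in $A$ with respect to $q$. Then $A=\bigoplus_{p=0}^wH^p$, $H^0=V_1$ and $V_w=\bigoplus_{p=0}^{w-1}H^p$. *)

theory Defs
  imports Complex_Main
begin

text \<open>The finite reduced zero scheme Z is modelled by a finite type 'z; the algebra
A = H^0(O_Z) is the type of functions 'z => complex (pointwise operations).
Sections of the invertible sheaf on Z are identified with functions on Z
via a fixed trivialisation, so E_Z is a linear subspace of 'z => complex.\<close>

definition fadd :: "('z \<Rightarrow> complex) \<Rightarrow> ('z \<Rightarrow> complex) \<Rightarrow> ('z \<Rightarrow> complex)" where
  "fadd f g = (\<lambda>x. f x + g x)"

definition fsub :: "('z \<Rightarrow> complex) \<Rightarrow> ('z \<Rightarrow> complex) \<Rightarrow> ('z \<Rightarrow> complex)" where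
  "fsub f g = (\<lambda>x. f x - g x)"

definition fmul :: "('z \<Rightarrow> complex) \<Rightarrow> ('z \<Rightarrow> complex) \<Rightarrow> ('z \<Rightarrow> complex)" where
  "fmul f g = (\<lambda>x. f x * g x)"

definition is_subspace :: "('z \<Rightarrow> complex) set \<Rightarrow> bool" where
  "is_subspace S \<longleftrightarrow> (\<lambda>x. 0) \<in> S \<and> (\<forall>f\<in>S. \<forall>g\<in>S. fadd f g \<in> S)
      \<and> (\<forall>c. \<forall>f\<in>S. (\<lambda>x. c * f x) \<in> S)"

definition lin_span :: "('z \<Rightarrow> complex) set \<Rightarrow> ('z \<Rightarrow> complex) set" where
  "lin_span S = {f. \<exists>T c. finite T \<and> T \<subseteq> S \<and> f = (\<lambda>x. \<Sum>g\<in>T. c g * g x)}"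

definition Vpow :: "('z \<Rightarrow> complex) set \<Rightarrow> nat \<Rightarrow> ('z \<Rightarrow> complex) set" where
  "Vpow V1 k = (if k = 0 then {\<lambda>x. 0}
     else lin_span {(\<lambda>x. \<Prod>i<k. fs i x) | fs. \<forall>i<k. fs i \<in> V1})"

definition stab_index :: "('z \<Rightarrow> complex) set \<Rightarrow> nat" where
  "stab_index V1 = (LEAST w. 1 \<le> w \<and> (\<forall>k\<ge>w. Vpow V1 k = Vpow V1 w))"

definition trace_form :: "('z::finite \<Rightarrow> complex) \<Rightarrow> ('z \<Rightarrow> complex) \<Rightarrow> complex" where
  "trace_form f g = (\<Sum>z\<in>UNIV. f z * g z)"

definition q_orth :: "('z::finite \<Rightarrow> complex) set \<Rightarrow> ('z \<Rightarrow> complex) set" where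
  "q_orth S = {f. \<forall>g\<in>S. trace_form f g = 0}"

definition nondeg_on :: "('z::finite \<Rightarrow> complex) set \<Rightarrow> bool" where
  "nondeg_on S \<longleftrightarrow> (\<forall>f\<in>S. (\<forall>g\<in>S. trace_form f g = 0) \<longrightarrow> f = (\<lambda>x. 0))"

definition regular :: "('z \<Rightarrow> complex) \<Rightarrow> bool" where
  "regular \<alpha> \<longleftrightarrow> (\<forall>z. \<alpha> z \<noteq> 0)"

definition V1_of :: "('z \<Rightarrow> complex) set \<Rightarrow> ('z \<Rightarrow> complex) \<Rightarrow> ('z \<Rightarrow> complex) set" where
  "V1_of E \<alpha> = {(\<lambda>z. \<beta> z / \<alpha> z) | \<beta>. \<beta> \<in> E}"

definition polarizing :: "('z::finite \<Rightarrow> complex) set \<Rightarrow> ('z \<Rightarrow> complex) \<Rightarrow> bool" where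
  "polarizing E \<alpha> \<longleftrightarrow> \<alpha> \<in> E \<and> regular \<alpha> \<and> (\<forall>k\<ge>1. nondeg_on (Vpow (V1_of E \<alpha>) k))"

definition wE :: "('z \<Rightarrow> complex) set \<Rightarrow> ('z \<Rightarrow> complex) \<Rightarrow> nat" where
  "wE E \<alpha> = stab_index (V1_of E \<alpha>)"

definition VE :: "('z \<Rightarrow> complex) set \<Rightarrow> ('z \<Rightarrow> complex) \<Rightarrow> nat \<Rightarrow> ('z \<Rightarrow> complex) set" where
  "VE E \<alpha> k = Vpow (V1_of E \<alpha>) k"

definition Hsp :: "('z::finite \<Rightarrow> complex) set \<Rightarrow> ('z \<Rightarrow> complex) \<Rightarrow> nat \<Rightarrow> ('z \<Rightarrow> complex) set" where
  "Hsp E \<alpha> p = (if p < wE E \<alpha> then q_orth (VE E \<alpha> p) \<inter> VE E \<alpha> (Suc p)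
                 else if p = wE E \<alpha> then q_orth (VE E \<alpha> (wE E \<alpha>)) else {\<lambda>x. 0})"

definition hcomp :: "('z::finite \<Rightarrow> complex) set \<Rightarrow> ('z \<Rightarrow> complex) \<Rightarrow> nat \<Rightarrow> ('z \<Rightarrow> complex) \<Rightarrow> ('z \<Rightarrow> complex)" where
  "hcomp E \<alpha> j f = (THE g. \<exists>gs. (\<forall>i. gs i \<in> Hsp E \<alpha> i)
       \<and> f = (\<lambda>x. \<Sum>i\<le>wE E \<alpha>. gs i x) \<and> g = gs j)"

definition Dzero :: "('z::finite \<Rightarrow> complex) set \<Rightarrow> ('z \<Rightarrow> complex) \<Rightarrow> ('z \<Rightarrow> complex) \<Rightarrow> ('z \<Rightarrow> complex) \<Rightarrow> ('z \<Rightarrow> complex)" where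
  "Dzero E \<alpha> t f = (\<lambda>x. \<Sum>p<wE E \<alpha>. hcomp E \<alpha> p (fmul t (hcomp E \<alpha> p f)) x)"

definition Dplus :: "('z::finite \<Rightarrow> complex) set \<Rightarrow> ('z \<Rightarrow> complex) \<Rightarrow> ('z \<Rightarrow> complex) \<Rightarrow> ('z \<Rightarrow> complex) \<Rightarrow> ('z \<Rightarrow> complex)" where
  "Dplus E \<alpha> t f = (\<lambda>x. \<Sum>p<wE E \<alpha> - 1. hcomp E \<alpha> (Suc p) (fmul t (hcomp E \<alpha> p f)) x)"

definition Dminus :: "('z::finite \<Rightarrow> complex) set \<Rightarrow> ('z \<Rightarrow> complex) \<Rightarrow> ('z \<Rightarrow> complex) \<Rightarrow> ('z \<Rightarrow> complex) \<Rightarrow> ('z \<Rightarrow> complex)" where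
  "Dminus E \<alpha> t f = (\<lambda>x. \<Sum>p\<in>{1..<wE E \<alpha>}. hcomp E \<alpha> (p - 1) (fmul t (hcomp E \<alpha> p f)) x)"

end

theory Submission
  imports Defs "HOL-Library.Function_Algebras"
begin

lemma sum_fun_apply: "(\<Sum>i\<in>S. F i) x = (\<Sum>i\<in>S. F i x)"
  by (induction S rule: infinite_finite_induct) auto

lemma sum_fun_lam: "(\<lambda>x. \<Sum>i\<in>S. F i x) = (\<Sum>i\<in>S. F i)"
  by (simp add: fun_eq_iff sum_fun_apply)

lemma fadd_eq: "fadd f g = f + g" by (simp add: fadd_def fun_eq_iff)
lemma fsub_eq: "fsub f g = f - g" by (simp add: fsub_def fun_eq_iff)
lemma fmul_eq: "fmul f g = f * g" by (simp add: fmul_def fun_eq_iff)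
lemma zero_fun_lam: "(\<lambda>x. 0) = 0" by (simp add: fun_eq_iff)

lemma sum_delta_mult: "finite S \<Longrightarrow> z \<in> S \<Longrightarrow> (\<Sum>y\<in>S. c y * (if z = y then 1 else 0)) = (c z :: complex)"
proof -
  assume "finite S" "z \<in> S"
  have "(\<Sum>y\<in>S. c y * (if z = y then 1 else 0)) = (\<Sum>y\<in>S. if y = z then c y else 0)"
    by (rule sum.cong) auto
  then show ?thesis using \<open>finite S\<close> \<open>z \<in> S\<close> by simp
qed

lemma sum_delta_mult': "finite S \<Longrightarrow> z \<in> S \<Longrightarrow> (\<Sum>y\<in>S. c y * (if y = z then 1 else 0)) = (c z :: complex)"
  using sum_delta_mult[of S z c] by (simp add: eq_commute)

interpretation fv: vector_space "\<lambda>(c::complex) (f::'z \<Rightarrow> complex) x. c * f x"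
  by unfold_locales (auto simp: fun_eq_iff algebra_simps)

definition delta :: "'z \<Rightarrow> 'z \<Rightarrow> complex" where
  "delta z = (\<lambda>x. if x = z then 1 else 0)"

lemma span_delta: "fv.span (range delta) = (UNIV :: ('z::finite \<Rightarrow> complex) set)"
proof -
  have "f \<in> fv.span (range delta)" for f :: "'z \<Rightarrow> complex"
  proof -
    have "f = (\<Sum>z\<in>UNIV. (\<lambda>x. f z * delta z x))"
      by (simp add: fun_eq_iff sum_fun_apply delta_def sum_delta_mult' sum_delta_mult)
    also have "\<dots> \<in> fv.span (range delta)"
      by (intro fv.span_sum fv.span_scale fv.span_base) auto
    finally show ?thesis .
  qed
  then show ?thesis by auto
qed

lemma indep_delta: "\<not> fv.dependent (range (delta :: 'z::finite \<Rightarrow> _))"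
proof
  assume "fv.dependent (range (delta :: 'z \<Rightarrow> _))"
  then obtain u where u: "\<exists>v\<in>range delta. u v \<noteq> 0"
    and s: "(\<Sum>v\<in>range (delta :: 'z \<Rightarrow> _). (\<lambda>x. u v * v x)) = 0"
    by (subst (asm) fv.dependent_finite) auto
  obtain z where z: "u (delta z) \<noteq> 0" using u by auto
  have inj: "inj delta" by (auto simp: inj_def delta_def fun_eq_iff split: if_splits)
  have "0 = (\<Sum>v\<in>range (delta :: 'z \<Rightarrow> _). (\<lambda>x. u v * v x)) z" using s by simp
  also have "\<dots> = (\<Sum>y\<in>UNIV. u (delta y) * delta y z)"
    by (simp add: sum_fun_apply sum.reindex[OF inj])
  also have "\<dots> = u (delta z)"
    by (simp add: delta_def sum_delta_mult)
  finally show False using z by simp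
qed

interpretation fd: finite_dimensional_vector_space
  "\<lambda>(c::complex) (f::'z::finite \<Rightarrow> complex) x. c * f x" "range delta"
  by unfold_locales (auto simp: span_delta indep_delta)

interpretation fp: finite_dimensional_vector_space_pair_1
  "\<lambda>(c::complex) (f::'z::finite \<Rightarrow> complex) x. c * f x" "range delta"
  "\<lambda>(c::complex) (f::'z::finite \<Rightarrow> complex) x. c * f x"
  by unfold_locales


section \<open>Trace form\<close>

lemma tf_add1: "trace_form (f + g) h = trace_form f h + trace_form g h"
  by (simp add: trace_form_def algebra_simps sum.distrib)
lemma tf_add2: "trace_form h (f + g) = trace_form h f + trace_form h g"
  by (simp add: trace_form_def algebra_simps sum.distrib)
lemma tf_diff1: "trace_form (f - g) h = trace_form f h - trace_form g h"
  by (simp add: trace_form_def algebra_simps sum_subtractf)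
lemma tf_diff2: "trace_form h (f - g) = trace_form h f - trace_form h g"
  by (simp add: trace_form_def algebra_simps sum_subtractf)
lemma tf_scale1: "trace_form (\<lambda>x. c * f x) g = c * trace_form f g"
  by (simp add: trace_form_def sum_distrib_left algebra_simps)
lemma tf_sym: "trace_form f g = trace_form g f"
  by (simp add: trace_form_def mult.commute)
lemma tf_zero1[simp]: "trace_form 0 g = 0"
  by (simp add: trace_form_def)
lemma tf_zero2[simp]: "trace_form g 0 = 0"
  by (simp add: trace_form_def)
lemma tf_zero1'[simp]: "trace_form (\<lambda>x. 0) g = 0"
  by (simp add: trace_form_def)
lemma tf_zero2'[simp]: "trace_form g (\<lambda>x. 0) = 0"
  by (simp add: trace_form_def)
lemma tf_sum1: "trace_form (\<Sum>i\<in>S. F i) g = (\<Sum>i\<in>S. trace_form (F i) g)"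
  by (simp add: trace_form_def sum_fun_apply sum_distrib_right sum.swap[of _ UNIV])
lemma tf_mult: "trace_form (t * f) g = trace_form f (t * g)"
  by (simp add: trace_form_def mult_ac)
lemma tf_delta: "trace_form f (delta z) = f z"
  by (simp add: trace_form_def delta_def sum_delta_mult')

lemma q_orth_subspace: "fv.subspace (q_orth S)"
  unfolding fv.subspace_def q_orth_def
  by (auto simp: tf_add1 tf_scale1 zero_fun_lam[symmetric])

lemma orth_span:
  assumes "\<forall>b\<in>B. trace_form f b = 0" "g \<in> fv.span B"
  shows "trace_form f g = 0"
proof -
  have "fv.subspace {g. trace_form f g = 0}"
    unfolding fv.subspace_def
  proof (intro conjI ballI allI)
    show "0 \<in> {g. trace_form f g = 0}" by simp
    fix x y assume "x \<in> {g. trace_form f g = 0}" "y \<in> {g. trace_form f g = 0}"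
    then show "x + y \<in> {g. trace_form f g = 0}" by (simp add: tf_add2)
  next
    fix c x assume "x \<in> {g. trace_form f g = 0}"
    then show "(\<lambda>z. c * x z) \<in> {g. trace_form f g = 0}"
      using tf_scale1[of c x f] by (simp add: tf_sym[of f])
  qed
  then show ?thesis using fv.span_induct[OF assms(2), of "\<lambda>g. trace_form f g = 0"] assms(1) by auto
qed

lemma orth_zero:
  assumes "\<forall>g. trace_form (f :: 'z::finite \<Rightarrow> complex) g = 0" shows "f = 0"
  using assms by (auto simp: fun_eq_iff tf_delta[symmetric])

lemma orth_proj:
  fixes S :: "('z::finite \<Rightarrow> complex) set"
  assumes S: "fv.subspace S" and nd: "nondeg_on S"
  shows "\<exists>s\<in>S. f - s \<in> q_orth S"
proof -
  obtain B where B: "B \<subseteq> S" "fv.independent B" "S \<subseteq> fv.span B" "card B = fv.dim S"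
    using fv.basis_exists by blast
  have fin: "finite B" using fd.finiteI_independent B(2) by blast
  define T where "T f = (\<Sum>b\<in>B. (\<lambda>x. trace_form f b * b x))" for f
  have lin: "Vector_Spaces.linear (\<lambda>(c::complex) (f::'z \<Rightarrow> complex) x. c * f x) (\<lambda>(c::complex) (f::'z \<Rightarrow> complex) x. c * f x) T"
    unfolding Vector_Spaces.linear_iff
  proof (intro conjI allI)
    show "vector_space (\<lambda>(c::complex) (f::'z \<Rightarrow> complex) x. c * f x)"
      by (rule fv.vector_space_axioms)
    then show "vector_space (\<lambda>(c::complex) (f::'z \<Rightarrow> complex) x. c * f x)" .
    fix x y :: "'z \<Rightarrow> complex" and c :: complex
    show "T (x + y) = T x + T y"
      by (simp add: T_def tf_add1 fun_eq_iff sum_fun_apply sum.distrib algebra_simps)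
    show "T (\<lambda>xa. c * x xa) = (\<lambda>xa. c * T x xa)"
      by (simp add: T_def tf_scale1 fun_eq_iff sum_fun_apply sum_distrib_left algebra_simps)
  qed
  interpret L: Vector_Spaces.linear "\<lambda>(c::complex) (f::'z \<Rightarrow> complex) x. c * f x" "\<lambda>(c::complex) (f::'z \<Rightarrow> complex) x. c * f x" T
    by (rule lin)
  have spanB: "fv.span B \<subseteq> S" using B(1) S fv.span_minimal by blast
  have TS: "T f \<in> S" for f
  proof -
    have "T f \<in> fv.span B"
      unfolding T_def by (intro fv.span_sum fv.span_scale fv.span_base) auto
    then show ?thesis using spanB by auto
  qed
  have coef: "\<forall>b\<in>B. trace_form y b = 0" if "T y = 0" for y
  proof (rule ccontr)
    assume "\<not> (\<forall>b\<in>B. trace_form y b = 0)"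
    then have "fv.dependent B"
      using that fin unfolding T_def
      by (subst fv.dependent_finite) (auto intro!: exI[of _ "\<lambda>b. trace_form y b"])
    then show False using B(2) by simp
  qed
  have inj: "inj_on T S"
  proof (subst L.inj_on_iff_eq_0[OF S], intro ballI impI)
    fix x assume x: "x \<in> S" "T x = 0"
    have "\<forall>g\<in>S. trace_form x g = 0"
      using orth_span[OF coef[OF x(2)]] B(3) by auto
    then show "x = 0" using nd x(1) unfolding nondeg_on_def zero_fun_lam by auto
  qed
  have "fv.dim (T ` S) = fv.dim S"
    using fp.dim_image_eq[OF lin, of S] inj fv.span_eq_iff[THEN iffD2, OF S] by simp
  then have TSS: "T ` S = S"
    using fd.subspace_dim_equal[OF L.subspace_image[OF S] S] TS by auto
  obtain s where s: "s \<in> S" "T f = T s" using TS[of f] TSS by (metis imageE)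
  have "T (f - s) = 0" using s by (simp add: L.diff)
  then have "f - s \<in> q_orth S"
    using orth_span[OF coef] B(3) unfolding q_orth_def by auto
  then show ?thesis using s by auto
qed


section \<open>Polarized setting\<close>

lemma lin_span_eq: "lin_span S = fv.span S"
  unfolding lin_span_def fv.span_explicit
  by (auto simp: sum_fun_lam)

lemma is_subspace_iff: "is_subspace S \<longleftrightarrow> fv.subspace S"
  unfolding is_subspace_def fv.subspace_def by (simp add: fadd_eq zero_fun_lam)

definition gens :: "('z \<Rightarrow> complex) set \<Rightarrow> nat \<Rightarrow> ('z \<Rightarrow> complex) set" where
  "gens V1 k = {(\<lambda>x. \<Prod>i<k. fs i x) | fs. \<forall>i<k. fs i \<in> V1}"

lemma gens_mem: "x \<in> gens V1 k \<longleftrightarrow> (\<exists>fs. (\<forall>i<k. fs i \<in> V1) \<and> x = (\<lambda>y. \<Prod>i<k. fs i y))"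
  unfolding gens_def by blast

locale polz =
  fixes E :: "('z::finite \<Rightarrow> complex) set" and \<alpha> :: "'z \<Rightarrow> complex"
  assumes subE: "is_subspace E" and polE: "polarizing E \<alpha>"
begin

abbreviation "V1 \<equiv> V1_of E \<alpha>"
abbreviation "V k \<equiv> VE E \<alpha> k"
abbreviation "w \<equiv> wE E \<alpha>"
abbreviation "H p \<equiv> Hsp E \<alpha> p"
abbreviation "P j \<equiv> hcomp E \<alpha> j"

lemma V_eq: "V k = (if k = 0 then {0} else fv.span (gens V1 k))"
  unfolding VE_def Vpow_def gens_def lin_span_eq by (simp add: zero_fun_lam)

lemma V1_sub: "fv.subspace V1"
proof -
  have E: "fv.subspace E" using subE is_subspace_iff by blast
  show ?thesis unfolding fv.subspace_def V1_of_def
  proof (intro conjI ballI allI)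
    show "0 \<in> {\<lambda>z. \<beta> z / \<alpha> z |\<beta>. \<beta> \<in> E}"
      using fv.subspace_0[OF E] by (auto intro!: exI[of _ 0] simp: fun_eq_iff)
  next
    fix x y assume "x \<in> {\<lambda>z. \<beta> z / \<alpha> z |\<beta>. \<beta> \<in> E}" "y \<in> {\<lambda>z. \<beta> z / \<alpha> z |\<beta>. \<beta> \<in> E}"
    then obtain b1 b2 where "b1 \<in> E" "b2 \<in> E" "x = (\<lambda>z. b1 z / \<alpha> z)" "y = (\<lambda>z. b2 z / \<alpha> z)" by auto
    then show "x + y \<in> {\<lambda>z. \<beta> z / \<alpha> z |\<beta>. \<beta> \<in> E}"
      using fv.subspace_add[OF E, of b1 b2]
      by (auto intro!: exI[of _ "b1 + b2"] simp: fun_eq_iff add_divide_distrib)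
  next
    fix c x assume "x \<in> {\<lambda>z. \<beta> z / \<alpha> z |\<beta>. \<beta> \<in> E}"
    then obtain b1 where "b1 \<in> E" "x = (\<lambda>z. b1 z / \<alpha> z)" by auto
    then show "(\<lambda>z. c * x z) \<in> {\<lambda>z. \<beta> z / \<alpha> z |\<beta>. \<beta> \<in> E}"
      using fv.subspace_scale[OF E, of b1 c]
      by (auto intro!: exI[of _ "\<lambda>z. c * b1 z"] simp: fun_eq_iff)
  qed
qed

lemma one_V1: "1 \<in> V1"
proof -
  have "\<alpha> \<in> E" "\<forall>z. \<alpha> z \<noteq> 0" using polE unfolding polarizing_def regular_def by auto
  then show ?thesis unfolding V1_of_def by (auto intro!: exI[of _ \<alpha>] simp: fun_eq_iff)
qed

lemma V_sub: "fv.subspace (V k)"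
  by (simp add: V_eq)

lemma V0: "V 0 = {0}" by (simp add: V_eq)

lemma gens1: "gens V1 1 = V1"
proof (rule set_eqI)
  fix x
  show "x \<in> gens V1 1 \<longleftrightarrow> x \<in> V1"
  proof
    assume "x \<in> gens V1 1"
    then obtain fs where "x = (\<lambda>y. \<Prod>i::nat<1. fs i y)" "\<forall>i<1. fs i \<in> V1"
      unfolding gens_def by blast
    then show "x \<in> V1" by simp
  next
    assume "x \<in> V1"
    then have "x = (\<lambda>y. \<Prod>i::nat<1. (\<lambda>_. x) i y) \<and> (\<forall>i<1. (\<lambda>_. x) i \<in> V1)" by (simp add: fun_eq_iff)
    then show "x \<in> gens V1 1" unfolding gens_def mem_Collect_eq
      by (rule exI[of _ "\<lambda>_::nat. x"])
  qed
qed

lemma V1_eq: "V 1 = V1"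
  using V_eq[of 1] gens1 fv.span_eq_iff V1_sub by simp

lemma mult_V: assumes t: "t \<in> V1" and g: "g \<in> V k" shows "t * g \<in> V (Suc k)"
proof (cases "k = 0")
  case True
  then show ?thesis using g fv.subspace_0[OF V_sub[of "Suc 0"]] by (simp add: V0)
next
  case False
  have gk: "g \<in> fv.span (gens V1 k)" using g False by (simp add: V_eq)
  have S: "fv.subspace {g. t * g \<in> V (Suc k)}"
    unfolding fv.subspace_def
  proof (intro conjI ballI allI)
    show "0 \<in> {g. t * g \<in> V (Suc k)}" using fv.subspace_0[OF V_sub[of "Suc k"]] by simp
  next
    fix x y assume "x \<in> {g. t * g \<in> V (Suc k)}" "y \<in> {g. t * g \<in> V (Suc k)}"
    then show "x + y \<in> {g. t * g \<in> V (Suc k)}"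
      using fv.subspace_add[OF V_sub] by (simp add: distrib_left)
  next
    fix c x assume "x \<in> {g. t * g \<in> V (Suc k)}"
    then have "(\<lambda>z. c * (t * x) z) \<in> V (Suc k)" using fv.subspace_scale[OF V_sub] by blast
    moreover have "t * (\<lambda>z. c * x z) = (\<lambda>z. c * (t * x) z)" by (simp add: fun_eq_iff)
    ultimately show "(\<lambda>z. c * x z) \<in> {g. t * g \<in> V (Suc k)}"
      by (simp only: mem_Collect_eq)
  qed
  have gen: "t * x \<in> V (Suc k)" if xg: "x \<in> gens V1 k" for x
  proof -
    obtain fs where fs: "\<forall>i<k. fs i \<in> V1" "x = (\<lambda>x. \<Prod>i<k. fs i x)"
      using xg unfolding gens_mem by blast
    have "(\<Prod>i<Suc k. (fs(k := t)) i y) = t y * (\<Prod>i<k. fs i y)" for y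
    proof -
      have "(\<Prod>i<k. (fs(k := t)) i y) = (\<Prod>i<k. fs i y)"
        by (rule prod.cong) auto
      then show ?thesis by (simp add: prod.lessThan_Suc)
    qed
    then have "t * x = (\<lambda>x. \<Prod>i<Suc k. (fs(k := t)) i x)"
      using fs(2) by (simp add: fun_eq_iff)
    moreover have "\<forall>i<Suc k. (fs(k := t)) i \<in> V1" using fs(1) t by (simp add: less_Suc_eq)
    ultimately have "t * x \<in> gens V1 (Suc k)" unfolding gens_mem by blast
    then show ?thesis by (simp add: V_eq fv.span_base)
  qed
  show ?thesis
    by (rule fv.span_induct[OF gk S], rule gen)
qed

lemma mono1: "V k \<subseteq> V (Suc k)"
proof
  fix x assume "x \<in> V k"
  then have "1 * x \<in> V (Suc k)" by (rule mult_V[OF one_V1])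
  then show "x \<in> V (Suc k)" by simp
qed

lemma mono: "k \<le> m \<Longrightarrow> V k \<subseteq> V m"
  using lift_Suc_mono_le[of V, OF mono1] by blast

lemma stab_step: assumes "V (Suc k) = V k" shows "V (Suc (Suc k)) = V (Suc k)"
proof
  show "V (Suc k) \<subseteq> V (Suc (Suc k))" by (rule mono1)
  have "gens V1 (Suc (Suc k)) \<subseteq> V (Suc k)"
  proof
    fix x assume "x \<in> gens V1 (Suc (Suc k))"
    then obtain fs where fs: "\<forall>i<Suc (Suc k). fs i \<in> V1" "x = (\<lambda>x. \<Prod>i<Suc (Suc k). fs i x)"
      unfolding gens_mem by blast
    have "(\<lambda>x. \<Prod>i<Suc k. fs i x) \<in> gens V1 (Suc k)" using fs(1) unfolding gens_mem by (intro exI[of _ fs]) simp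
    then have "(\<lambda>x. \<Prod>i<Suc k. fs i x) \<in> V (Suc k)" by (simp add: V_eq fv.span_base)
    then have "(\<lambda>x. \<Prod>i<Suc k. fs i x) \<in> V k" using assms by simp
    then have "fs (Suc k) * (\<lambda>x. \<Prod>i<Suc k. fs i x) \<in> V (Suc k)"
      using mult_V fs(1) by blast
    moreover have "x = fs (Suc k) * (\<lambda>x. \<Prod>i<Suc k. fs i x)"
      using fs(2) by (simp add: fun_eq_iff mult.commute)
    ultimately show "x \<in> V (Suc k)" by simp
  qed
  then show "V (Suc (Suc k)) \<subseteq> V (Suc k)"
    using fv.span_minimal[OF _ V_sub] by (metis V_eq nat.distinct(1))
qed

lemma stab_from1: assumes "V (Suc k) = V k" shows "m \<ge> k \<Longrightarrow> V (Suc m) = V m"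
proof (induction m rule: dec_induct)
  case base then show ?case using assms .
next
  case (step n) then show ?case using stab_step by blast
qed

lemma stab_from: assumes "V (Suc k) = V k" shows "m \<ge> k \<Longrightarrow> V m = V k"
proof (induction m rule: dec_induct)
  case base then show ?case by simp
next
  case (step n) then show ?case using stab_from1[OF assms, of n] by simp
qed

lemma exists_stab: "\<exists>k. V (Suc k) = V k"
proof (rule ccontr)
  assume "\<not> ?thesis"
  then have ne: "V (Suc k) \<noteq> V k" for k by blast
  have "fv.dim (V k) \<ge> k" for k
  proof (induction k)
    case 0 then show ?case by simp
  next
    case (Suc k)
    have ps: "V k \<subset> V (Suc k)"
      using mono1[of k] ne[of k] unfolding psubset_eq by metis
    have sp: "fv.span (V j) = V j" for j
      using fv.span_eq_iff V_sub by blast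
    have "fv.span (V k) \<subset> fv.span (V (Suc k))"
      unfolding sp by (rule ps)
    then have "fv.dim (V k) < fv.dim (V (Suc k))" by (rule fd.dim_psubset)
    then show ?case using Suc by simp
  qed
  then have "fv.dim (V (Suc (fv.dim (UNIV :: ('z \<Rightarrow> complex) set)))) \<ge> Suc (fv.dim (UNIV :: ('z \<Rightarrow> complex) set))" .
  moreover have "fv.dim (V (Suc (fv.dim (UNIV :: ('z \<Rightarrow> complex) set)))) \<le> fv.dim (UNIV :: ('z \<Rightarrow> complex) set)"
    by (rule fd.dim_subset) simp
  ultimately show False by simp
qed

lemma w_props: "1 \<le> w \<and> (\<forall>k\<ge>w. V k = V w)"
proof -
  obtain k where k: "V (Suc k) = V k" using exists_stab by blast
  have ex: "1 \<le> Suc k \<and> (\<forall>m\<ge>Suc k. Vpow V1 m = Vpow V1 (Suc k))"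
  proof (intro conjI allI impI)
    show "1 \<le> Suc k" by simp
    fix m assume "m \<ge> Suc k"
    then have "V m = V k" using stab_from[OF k, of m] by simp
    then have "V m = V (Suc k)" using k by simp
    then show "Vpow V1 m = Vpow V1 (Suc k)" unfolding VE_def .
  qed
  have "1 \<le> w \<and> (\<forall>m\<ge>w. Vpow V1 m = Vpow V1 w)"
    unfolding wE_def stab_index_def by (rule LeastI[where P="\<lambda>w. 1 \<le> w \<and> (\<forall>m\<ge>w. Vpow V1 m = Vpow V1 w)", OF ex])
  then show ?thesis unfolding VE_def .
qed

lemma w_ge1: "1 \<le> w" using w_props by blast
lemma V_stab: "k \<ge> w \<Longrightarrow> V k = V w" using w_props by blast
lemma V_le_w: "V k \<subseteq> V w"
proof (cases "k \<le> w")
  case True then show ?thesis by (rule mono)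
next
  case False then show ?thesis using V_stab[of k] by simp
qed

end


context polz
begin

lemma nondeg: "nondeg_on (V k)"
proof (cases "k = 0")
  case True then show ?thesis by (simp add: V0 nondeg_on_def zero_fun_lam)
next
  case False then show ?thesis using polE unfolding polarizing_def VE_def by simp
qed

lemma nondeg': "f \<in> V k \<Longrightarrow> (\<forall>g\<in>V k. trace_form f g = 0) \<Longrightarrow> f = 0"
  using nondeg[of k] unfolding nondeg_on_def zero_fun_lam by blast

lemma H_cases: "H p = (if p < w then q_orth (V p) \<inter> V (Suc p) else if p = w then q_orth (V w) else {0})"
  unfolding Hsp_def zero_fun_lam ..

lemma H_sub: "fv.subspace (H p)"
  by (simp add: H_cases fv.subspace_inter q_orth_subspace V_sub)

lemma H_in_V: "p < w \<Longrightarrow> x \<in> H p \<Longrightarrow> x \<in> V (Suc p)"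
  by (simp add: H_cases)

lemma H_orth: "p \<le> w \<Longrightarrow> x \<in> H p \<Longrightarrow> x \<in> q_orth (V p)"
  by (cases "p < w") (auto simp: H_cases)

lemma H_big: "w < p \<Longrightarrow> x \<in> H p \<Longrightarrow> x = 0"
  by (simp add: H_cases)

lemma H0: "H 0 = V 1"
  using w_ge1 by (simp add: H_cases V0 q_orth_def)

lemma H0_V1: "t \<in> H 0 \<Longrightarrow> t \<in> V1"
  using H0 V1_eq by simp

lemma H_ortho_lt:
  assumes "i < j" "a \<in> H i" "b \<in> H j" shows "trace_form a b = 0"
proof (cases "j \<le> w")
  case True
  then have "a \<in> V (Suc i)" using assms H_in_V by simp
  then have "a \<in> V j" using mono[of "Suc i" j] assms(1) by auto
  moreover have "b \<in> q_orth (V j)" using H_orth True assms(3) by simp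
  ultimately show ?thesis unfolding q_orth_def by (simp add: tf_sym)
next
  case False then have "b = 0" using H_big[of j b] assms(3) by simp
  then show ?thesis by simp
qed

lemma H_ortho: "i \<noteq> j \<Longrightarrow> a \<in> H i \<Longrightarrow> b \<in> H j \<Longrightarrow> trace_form a b = 0"
  using H_ortho_lt[of i j a b] H_ortho_lt[of j i b a] by (auto simp: tf_sym linorder_neq_iff)

lemma orthV: "\<exists>s\<in>V k. f - s \<in> q_orth (V k)"
  using orth_proj[OF V_sub nondeg] .

lemma H_selfnd:
  assumes d: "d \<in> H j" and o: "\<forall>h\<in>H j. trace_form d h = 0" shows "d = 0"
proof -
  consider "j < w" | "j = w" | "w < j" by linarith
  then show ?thesis
  proof cases
    case 1
    have dq: "d \<in> q_orth (V j)" and dv: "d \<in> V (Suc j)" using d 1 by (auto simp: H_cases)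
    have "\<forall>v\<in>V (Suc j). trace_form d v = 0"
    proof
      fix v assume v: "v \<in> V (Suc j)"
      obtain s where s: "s \<in> V j" "v - s \<in> q_orth (V j)" using orthV by blast
      have "s \<in> V (Suc j)" using s(1) mono1 by auto
      then have "v - s \<in> V (Suc j)" using v fv.subspace_diff[OF V_sub] by blast
      then have "v - s \<in> H j" using s(2) 1 by (simp add: H_cases)
      then have "trace_form d (v - s) = 0" using o by blast
      moreover have "trace_form d s = 0" using dq s(1) unfolding q_orth_def by blast
      ultimately show "trace_form d v = 0" by (simp add: tf_diff2)
    qed
    then show ?thesis using nondeg' dv by blast
  next
    case 2
    have dq: "d \<in> q_orth (V w)" using d 2 by (simp add: H_cases)
    have "\<forall>v. trace_form d v = 0"
    proof
      fix v
      obtain s where s: "s \<in> V w" "v - s \<in> q_orth (V w)" using orthV by blast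
      then have "v - s \<in> H j" using 2 by (simp add: H_cases)
      then have "trace_form d (v - s) = 0" using o by blast
      moreover have "trace_form d s = 0" using dq s(1) unfolding q_orth_def by blast
      ultimately show "trace_form d v = 0" by (simp add: tf_diff2)
    qed
    then show ?thesis by (rule orth_zero)
  next
    case 3 then show ?thesis using H_big d by simp
  qed
qed

lemma decomp_V: "k \<le> w \<Longrightarrow> f \<in> V k \<Longrightarrow> \<exists>gs. (\<forall>i. gs i \<in> H i) \<and> (\<forall>i\<ge>k. gs i = 0) \<and> f = (\<Sum>i\<le>w. gs i)"
proof (induction k arbitrary: f)
  case 0
  then have f0: "f = 0" by (simp add: V0)
  show ?case
  proof (intro exI[of _ "\<lambda>_::nat. 0::'z \<Rightarrow> complex"] conjI allI impI)
    fix i show "(\<lambda>_::nat. 0::'z \<Rightarrow> complex) i \<in> H i" using fv.subspace_0[OF H_sub] by simp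
  next
    fix i show "(\<lambda>_::nat. 0::'z \<Rightarrow> complex) i = 0" by simp
  next
    show "f = (\<Sum>i\<le>w. (\<lambda>_::nat. 0::'z \<Rightarrow> complex) i)" using f0 by simp
  qed
next
  case (Suc k)
  then have kw: "k < w" by simp
  obtain s where s: "s \<in> V k" "f - s \<in> q_orth (V k)" using orthV by blast
  have "s \<in> V (Suc k)" using s(1) mono1 by auto
  then have "f - s \<in> V (Suc k)" using Suc.prems fv.subspace_diff[OF V_sub] by blast
  then have fsH: "f - s \<in> H k" using s(2) kw by (simp add: H_cases)
  obtain gs where gs: "\<forall>i. gs i \<in> H i" "\<forall>i\<ge>k. gs i = 0" "s = (\<Sum>i\<le>w. gs i)"
    using Suc.IH[OF _ s(1)] kw by (auto simp: zero_fun_lam)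
  define gs' where "gs' i = gs i + (if i = k then f - s else 0)" for i
  have "\<forall>i. gs' i \<in> H i"
  proof
    fix i show "gs' i \<in> H i"
      using gs(1,2) fsH by (cases "i = k") (auto simp: gs'_def)
  qed
  moreover have "\<forall>i\<ge>Suc k. gs' i = 0" using gs(2) by (auto simp: gs'_def)
  moreover have "f = (\<Sum>i\<le>w. gs' i)"
    using gs(3) kw by (simp add: gs'_def sum.distrib)
  ultimately show ?case by blast
qed

lemma decomp: "\<exists>gs. (\<forall>i. gs i \<in> H i) \<and> f = (\<Sum>i\<le>w. gs i)"
proof -
  obtain s where s: "s \<in> V w" "f - s \<in> q_orth (V w)" using orthV by blast
  then have fsH: "f - s \<in> H w" by (simp add: H_cases)
  obtain gs where gs: "\<forall>i. gs i \<in> H i" "\<forall>i\<ge>w. gs i = 0" "s = (\<Sum>i\<le>w. gs i)"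
    using decomp_V[OF _ s(1)] by auto
  define gs' where "gs' i = gs i + (if i = w then f - s else 0)" for i
  have "\<forall>i. gs' i \<in> H i"
  proof
    fix i show "gs' i \<in> H i"
      using gs(1,2) fsH by (cases "i = w") (auto simp: gs'_def)
  qed
  moreover have "f = (\<Sum>i\<le>w. gs' i)"
    using gs(3) by (simp add: gs'_def sum.distrib)
  ultimately show ?thesis by blast
qed

lemma uniq0:
  assumes d: "\<forall>i. d i \<in> H i" and s: "(\<Sum>i\<le>w. d i) = 0" shows "d j = 0"
proof (cases "j \<le> w")
  case True
  have "\<forall>h\<in>H j. trace_form (d j) h = 0"
  proof
    fix h assume h: "h \<in> H j"
    have "0 = trace_form (\<Sum>i\<le>w. d i) h" using s by simp
    also have "\<dots> = (\<Sum>i\<le>w. trace_form (d i) h)" by (rule tf_sum1)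
    also have "\<dots> = (\<Sum>i\<le>w. if i = j then trace_form (d j) h else 0)"
      by (rule sum.cong) (use H_ortho d h in auto)
    also have "\<dots> = trace_form (d j) h" using True by simp
    finally show "trace_form (d j) h = 0" by simp
  qed
  then show ?thesis using H_selfnd d by blast
next
  case False then show ?thesis using H_big[of j "d j"] d by simp
qed

lemma uniq:
  assumes "\<forall>i. gs i \<in> H i" "\<forall>i. hs i \<in> H i" "(\<Sum>i\<le>w. gs i) = (\<Sum>i\<le>w. hs i)"
  shows "gs j = hs j"
proof -
  have "\<forall>i. gs i - hs i \<in> H i" using assms(1,2) fv.subspace_diff[OF H_sub] by blast
  moreover have "(\<Sum>i\<le>w. gs i - hs i) = 0" using assms(3) by (simp add: sum_subtractf)
  ultimately have "gs j - hs j = 0" by (rule uniq0)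
  then show ?thesis by simp
qed

lemma P_char:
  assumes "\<forall>i. gs i \<in> H i" "f = (\<Sum>i\<le>w. gs i)" shows "P j f = gs j"
  unfolding hcomp_def sum_fun_lam
proof (rule the_equality)
  show "\<exists>gsa. (\<forall>i. gsa i \<in> H i) \<and> f = (\<Sum>i\<le>w. gsa i) \<and> gs j = gsa j"
    using assms by blast
  fix g assume "\<exists>gsa. (\<forall>i. gsa i \<in> H i) \<and> f = (\<Sum>i\<le>w. gsa i) \<and> g = gsa j"
  then obtain hs where "\<forall>i. hs i \<in> H i" "f = (\<Sum>i\<le>w. hs i)" "g = hs j" by blast
  then show "g = gs j" using uniq[of hs gs j] assms by simp
qed

lemma P_mem: "P j f \<in> H j"
  using decomp[of f] P_char by metis

lemma P_sum: "f = (\<Sum>j\<le>w. P j f)"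
proof -
  obtain gs where gs: "\<forall>i. gs i \<in> H i" "f = (\<Sum>i\<le>w. gs i)" using decomp by blast
  then have "P j f = gs j" for j by (rule P_char)
  then show ?thesis using gs(2) by simp
qed

lemma P_H: assumes g: "g \<in> H i" shows "P j g = (if j = i then g else 0)"
proof (rule P_char)
  show "\<forall>l. (if l = i then g else 0) \<in> H l" using g fv.subspace_0[OF H_sub] by auto
  show "g = (\<Sum>l\<le>w. if l = i then g else 0)"
  proof (cases "i \<le> w")
    case True then show ?thesis by simp
  next
    case False then have "g = 0" using H_big[of i g] g by simp
    then show ?thesis by simp
  qed
qed

lemma P_add: "P j (f + g) = P j f + P j g"
proof -
  have "P j (f + g) = (\<lambda>j. P j f + P j g) j"
  proof (rule P_char)
    show "\<forall>i. P i f + P i g \<in> H i" using P_mem fv.subspace_add[OF H_sub] by blast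
    show "f + g = (\<Sum>i\<le>w. P i f + P i g)"
      using P_sum[of f] P_sum[of g] by (simp add: sum.distrib)
  qed
  then show ?thesis by simp
qed

lemma P_scale: "P j (\<lambda>x. c * f x) = (\<lambda>x. c * P j f x)"
proof -
  have "P j (\<lambda>x. c * f x) = (\<lambda>j. (\<lambda>x. c * P j f x)) j"
  proof (rule P_char)
    show "\<forall>i. (\<lambda>x. c * P i f x) \<in> H i" using P_mem fv.subspace_scale[OF H_sub] by blast
    have "(\<lambda>x. c * f x) = (\<lambda>x. c * (\<Sum>i\<le>w. P i f) x)" using P_sum[of f] by simp
    also have "\<dots> = (\<Sum>i\<le>w. (\<lambda>x. c * P i f x))"
      by (simp add: fun_eq_iff sum_fun_apply sum_distrib_left)
    finally show "(\<lambda>x. c * f x) = (\<Sum>i\<le>w. (\<lambda>x. c * P i f x))" .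
  qed
  then show ?thesis by simp
qed

lemma P_zero: "P j 0 = 0"
  using P_H[OF fv.subspace_0[OF H_sub[of 0]], of j] by simp

declare [[show_types, show_sorts]]
thm P_zero
declare [[show_types=false, show_sorts=false]]
lemma P_diff: "P j (f - g) = P j f - P j g"
  using P_add[of j "f - g" g] by (simp add: algebra_simps)

lemma P_sumset: "finite S \<Longrightarrow> P j (\<Sum>p\<in>S. u p) = (\<Sum>p\<in>S. P j (u p))"
proof (induction S rule: finite_induct)
  case empty show ?case unfolding sum.empty by (rule P_zero)
next
  case (insert x F)
  show ?case unfolding sum.insert[OF insert(1,2)] P_add insert(3) by (rule refl)
qed

lemma P_V: assumes f: "f \<in> V k" and kj: "k \<le> j" shows "P j f = 0"
proof (cases "k \<le> w")
  case True
  obtain gs where gs: "\<forall>i. gs i \<in> H i" "\<forall>i\<ge>k. gs i = 0" "f = (\<Sum>i\<le>w. gs i)"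
    using decomp_V[OF True f] by blast
  then show ?thesis using P_char[OF gs(1,3)] kj by simp
next
  case False
  then have "f \<in> V w" using V_stab[of k] f by simp
  then obtain gs where gs: "\<forall>i. gs i \<in> H i" "\<forall>i\<ge>w. gs i = 0" "f = (\<Sum>i\<le>w. gs i)"
    using decomp_V[of w] by blast
  then show ?thesis using P_char[OF gs(1,3)] kj False by simp
qed

lemma band_hi: assumes t: "t \<in> H 0" and g: "g \<in> H k" and kw: "k < w" and j: "Suc (Suc k) \<le> j"
  shows "P j (t * g) = 0"
proof -
  have "t * g \<in> V (Suc (Suc k))" using mult_V[OF H0_V1[OF t] H_in_V[OF kw g]] .
  then show ?thesis using P_V j by blast
qed

lemma band_w: assumes t: "t \<in> H 0" and g: "g \<in> H k" and kw: "k < w"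
  shows "P w (t * g) = 0"
proof -
  have "t * g \<in> V (Suc (Suc k))" using mult_V[OF H0_V1[OF t] H_in_V[OF kw g]] .
  then have "t * g \<in> V w" using V_le_w by blast
  then show ?thesis using P_V by blast
qed

lemma band_lo: assumes t: "t \<in> H 0" and g: "g \<in> H k" and kw: "k < w" and j: "Suc (Suc j) \<le> k"
  shows "P j (t * g) = 0"
proof -
  have "\<forall>h\<in>H j. trace_form (P j (t * g)) h = 0"
  proof
    fix h assume h: "h \<in> H j"
    have "trace_form (t * g) h = trace_form (\<Sum>i\<le>w. P i (t * g)) h" using P_sum[of "t * g"] by simp
    also have "\<dots> = (\<Sum>i\<le>w. trace_form (P i (t * g)) h)" by (rule tf_sum1)
    also have "\<dots> = (\<Sum>i\<le>w. if i = j then trace_form (P j (t * g)) h else 0)"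
      by (rule sum.cong) (use H_ortho P_mem h in auto)
    also have "\<dots> = trace_form (P j (t * g)) h" using j kw by simp
    finally have eq: "trace_form (t * g) h = trace_form (P j (t * g)) h" .
    have "trace_form (t * g) h = trace_form g (t * h)" by (rule tf_mult)
    moreover have "t * h \<in> V (Suc (Suc j))" using mult_V[OF H0_V1[OF t] H_in_V[OF _ h]] j kw by simp
    then have "t * h \<in> V k" using mono[OF j] by blast
    moreover have "g \<in> q_orth (V k)" using H_orth g kw by simp
    ultimately have "trace_form (t * g) h = 0" unfolding q_orth_def by simp
    then show "trace_form (P j (t * g)) h = 0" using eq by simp
  qed
  then show ?thesis using H_selfnd P_mem by blast
qed

end


definition lin :: "(('z \<Rightarrow> complex) \<Rightarrow> ('z \<Rightarrow> complex)) \<Rightarrow> bool" where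
  "lin L \<longleftrightarrow> (\<forall>f g. L (f + g) = L f + L g) \<and> (\<forall>c f. L (\<lambda>x. c * f x) = (\<lambda>x. c * L f x))"

lemma lin_addD: "lin L \<Longrightarrow> L (f + g) = L f + L g" by (simp add: lin_def)
lemma lin_scaleD: "lin L \<Longrightarrow> L (\<lambda>x. c * f x) = (\<lambda>x. c * L f x)" by (simp add: lin_def)

lemma lin_zero: assumes "lin L" shows "L 0 = 0"
proof -
  have "L (0 + 0) = L 0 + L 0" by (rule lin_addD[OF assms])
  then show ?thesis by simp
qed

lemma lin_diff: assumes "lin L" shows "L (f - g) = L f - L g"
proof -
  have "L ((f - g) + g) = L (f - g) + L g" by (rule lin_addD[OF assms])
  then show ?thesis by (simp add: algebra_simps)
qed

lemma lin_sum: assumes L: "lin L" and S: "finite S" shows "L (\<Sum>p\<in>S. u p) = (\<Sum>p\<in>S. L (u p))"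
  using S
proof (induction S rule: finite_induct)
  case empty show ?case unfolding sum.empty by (rule lin_zero[OF L])
next
  case (insert x F)
  show ?case unfolding sum.insert[OF insert(1,2)] lin_addD[OF L] insert(3) by (rule refl)
qed

lemma lin_comp: "lin L \<Longrightarrow> lin M \<Longrightarrow> lin (\<lambda>f. L (M f))"
  by (simp add: lin_def)

lemma lin_plus: "lin L \<Longrightarrow> lin M \<Longrightarrow> lin (\<lambda>f. L f + M f)"
  by (simp add: lin_def algebra_simps fun_eq_iff)

lemma lin_minus: "lin L \<Longrightarrow> lin M \<Longrightarrow> lin (\<lambda>f. L f - M f)"
  by (simp add: lin_def algebra_simps fun_eq_iff)

lemma lin_mult: "lin (\<lambda>f. t * f)"
  by (simp add: lin_def algebra_simps fun_eq_iff)

lemma lin_sumfun: assumes "finite S" "\<forall>q\<in>S. lin (L q)" shows "lin (\<lambda>f. \<Sum>q\<in>S. L q f)"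
  unfolding lin_def
proof (intro conjI allI)
  fix f g
  have "\<And>q. q \<in> S \<Longrightarrow> L q (f + g) = L q f + L q g" using assms(2) lin_addD by blast
  then have "(\<Sum>q\<in>S. L q (f + g)) = (\<Sum>q\<in>S. L q f + L q g)" by (rule sum.cong[OF refl])
  also have "\<dots> = (\<Sum>q\<in>S. L q f) + (\<Sum>q\<in>S. L q g)" by (rule sum.distrib)
  finally show "(\<Sum>q\<in>S. L q (f + g)) = (\<Sum>q\<in>S. L q f) + (\<Sum>q\<in>S. L q g)" .
next
  fix c f
  have "\<And>q. q \<in> S \<Longrightarrow> L q (\<lambda>x. c * f x) = (\<lambda>x. c * L q f x)" using assms(2) lin_scaleD by blast
  then have "(\<Sum>q\<in>S. L q (\<lambda>x. c * f x)) = (\<Sum>q\<in>S. (\<lambda>x. c * L q f x))" by (rule sum.cong[OF refl])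
  also have "\<dots> = (\<lambda>x. c * (\<Sum>q\<in>S. L q f) x)"
    by (simp add: fun_eq_iff sum_fun_apply sum_distrib_left)
  finally show "(\<Sum>q\<in>S. L q (\<lambda>x. c * f x)) = (\<lambda>x. c * (\<Sum>q\<in>S. L q f) x)" .
qed

context polz
begin

abbreviation "D0 t \<equiv> Dzero E \<alpha> t"
abbreviation "Dp t \<equiv> Dplus E \<alpha> t"
abbreviation "Dm t \<equiv> Dminus E \<alpha> t"

lemma Dzero_eq: "D0 t f = (\<Sum>q<w. P q (t * P q f))"
  unfolding Dzero_def fmul_eq sum_fun_lam ..
lemma Dplus_eq: "Dp t f = (\<Sum>q<w - 1. P (Suc q) (t * P q f))"
  unfolding Dplus_def fmul_eq sum_fun_lam ..
lemma Dminus_eq: "Dm t f = (\<Sum>q\<in>{1..<w}. P (q - 1) (t * P q f))"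
  unfolding Dminus_def fmul_eq sum_fun_lam ..

lemma lin_P: "lin (P j)"
  by (simp add: lin_def P_add P_scale)

lemma lin_D0: "lin (D0 t)"
proof -
  have "lin (\<lambda>f. \<Sum>q<w. P q (t * P q f))"
    by (intro lin_sumfun ballI) (simp_all add: lin_comp[OF lin_P lin_comp[OF lin_mult lin_P]])
  then show ?thesis unfolding Dzero_eq .
qed

lemma lin_Dp: "lin (Dp t)"
proof -
  have "lin (\<lambda>f. \<Sum>q<w - 1. P (Suc q) (t * P q f))"
    by (intro lin_sumfun ballI) (simp_all add: lin_comp[OF lin_P lin_comp[OF lin_mult lin_P]])
  then show ?thesis unfolding Dplus_eq .
qed

lemma lin_Dm: "lin (Dm t)"
proof -
  have "lin (\<lambda>f. \<Sum>q\<in>{1..<w}. P (q - 1) (t * P q f))"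
    by (intro lin_sumfun ballI) (simp_all add: lin_comp[OF lin_P lin_comp[OF lin_mult lin_P]])
  then show ?thesis unfolding Dminus_eq .
qed

lemma PH_mult: "f \<in> H p \<Longrightarrow> P r (t * P q f) = (if q = p then P r (t * f) else 0)"
  using P_H[of f p q] P_zero by auto

lemma D0_H: assumes f: "f \<in> H p" shows "D0 t f = (if p < w then P p (t * f) else 0)"
proof -
  have "D0 t f = (\<Sum>q<w. if q = p then P p (t * f) else 0)"
    unfolding Dzero_eq by (rule sum.cong) (auto simp: PH_mult[OF f])
  then show ?thesis by simp
qed

lemma Dp_H: assumes f: "f \<in> H p" shows "Dp t f = (if Suc p < w then P (Suc p) (t * f) else 0)"
proof -
  have "Dp t f = (\<Sum>q<w - 1. if q = p then P (Suc p) (t * f) else 0)"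
    unfolding Dplus_eq by (rule sum.cong) (auto simp: PH_mult[OF f])
  then show ?thesis by auto
qed

lemma Dm_H: assumes f: "f \<in> H p" shows "Dm t f = (if 1 \<le> p \<and> p < w then P (p - 1) (t * f) else 0)"
proof -
  have "Dm t f = (\<Sum>q\<in>{1..<w}. if q = p then P (p - 1) (t * f) else 0)"
    unfolding Dminus_eq by (rule sum.cong) (auto simp: PH_mult[OF f])
  then show ?thesis by auto
qed

lemma H_in_Vw: "p < w \<Longrightarrow> x \<in> H p \<Longrightarrow> x \<in> V w"
  using H_in_V V_le_w by blast

lemma D0_V: "D0 t f \<in> V w"
  unfolding Dzero_eq by (rule fv.subspace_sum[OF V_sub]) (simp add: H_in_Vw[OF _ P_mem])
lemma Dp_V: "Dp t f \<in> V w"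
  unfolding Dplus_eq by (rule fv.subspace_sum[OF V_sub]) (simp add: H_in_Vw[OF _ P_mem])
lemma Dm_V: "Dm t f \<in> V w"
proof -
  have "P (q - 1) (t * P q f) \<in> V w" if "q \<in> {1..<w}" for q
  proof -
    have "q - 1 < w" using that by auto
    then show ?thesis by (rule H_in_Vw[OF _ P_mem])
  qed
  then show ?thesis unfolding Dminus_eq by (rule fv.subspace_sum[OF V_sub])
qed

lemma Vw_sum: assumes f: "f \<in> V w" shows "f = (\<Sum>p<w. P p f)"
proof -
  have e1: "(\<Sum>p\<le>w. P p f) = (\<Sum>p<Suc w. P p f)" by (simp only: lessThan_Suc_atMost)
  have e2: "(\<Sum>p<Suc w. P p f) = (\<Sum>p<w. P p f) + P w f" by (rule sum.lessThan_Suc)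
  have e3: "P w f = 0" by (rule P_V[OF f]) (rule order_refl)
  have "f = (\<Sum>p\<le>w. P p f)" by (rule P_sum)
  also have "\<dots> = (\<Sum>p<w. P p f) + P w f" using e1 e2 by (simp only:)
  also have "\<dots> = (\<Sum>p<w. P p f)" using e3 by (simp only: add_0_right)
  finally show ?thesis .
qed

lemma lin_ext:
  assumes L: "lin L" and h: "\<And>p g. p < w \<Longrightarrow> g \<in> H p \<Longrightarrow> L g = 0" and f: "f \<in> V w"
  shows "L f = 0"
proof -
  have "L f = L (\<Sum>p<w. P p f)" using Vw_sum[OF f] by simp
  also have "\<dots> = (\<Sum>p<w. L (P p f))" by (rule lin_sum[OF L]) simp
  also have "\<dots> = (\<Sum>p<w. 0)" by (rule sum.cong[OF refl]) (simp add: h P_mem)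
  also have "\<dots> = 0" by simp
  finally show ?thesis .
qed

end


context polz
begin

definition Gr :: "int \<Rightarrow> ('z \<Rightarrow> complex) \<Rightarrow> bool" where
  "Gr k x \<longleftrightarrow> (if 0 \<le> k \<and> k < int w then x \<in> H (nat k) else x = 0)"

lemma Gr_zero: "Gr k 0"
  by (simp add: Gr_def fv.subspace_0[OF H_sub])

lemma Gr_add: "Gr k x \<Longrightarrow> Gr k y \<Longrightarrow> Gr k (x + y)"
  by (auto simp: Gr_def fv.subspace_add[OF H_sub] split: if_splits)

lemma Gr_diff: "Gr k x \<Longrightarrow> Gr k y \<Longrightarrow> Gr k (x - y)"
  by (auto simp: Gr_def fv.subspace_diff[OF H_sub] split: if_splits)

lemma Gr_H: "p < w \<Longrightarrow> x \<in> H p \<Longrightarrow> Gr (int p) x"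
  by (simp add: Gr_def)

lemma Gr_P: assumes "Gr k x" shows "P j x = (if int j = k then x else 0)"
proof (cases "0 \<le> k \<and> k < int w")
  case True
  then have "x \<in> H (nat k)" using assms by (simp add: Gr_def)
  then show ?thesis using P_H[of x "nat k" j] True by auto
next
  case False
  then have "x = 0" using assms by (simp add: Gr_def)
  then show ?thesis by (simp add: P_zero)
qed

lemma Gr_V: assumes "Gr k x" shows "x \<in> V w"
proof (cases "0 \<le> k \<and> k < int w")
  case True
  then have "x \<in> H (nat k)" using assms by (simp add: Gr_def)
  moreover have "nat k < w" using True by arith
  ultimately show ?thesis using H_in_Vw by blast
next
  case False
  then have "x = 0" using assms by (simp add: Gr_def)
  then show ?thesis by (simp add: fv.subspace_0[OF V_sub])
qed

lemma Gr_zero_if: assumes "Gr l x" "\<And>j. int j = l \<Longrightarrow> x = 0" shows "x = 0"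
proof (cases "0 \<le> l")
  case True then show ?thesis using assms(2)[of "nat l"] by simp
next
  case False then show ?thesis using assms(1) by (simp add: Gr_def)
qed

lemma Gr_shift:
  assumes t: "t \<in> H 0" and x: "Gr k x"
  shows "Gr k (D0 t x) \<and> Gr (k + 1) (Dp t x) \<and> Gr (k - 1) (Dm t x)"
proof (cases "0 \<le> k \<and> k < int w")
  case True
  define p where "p = nat k"
  have xH: "x \<in> H p" using x True by (simp add: Gr_def p_def)
  have kp: "k = int p" "p < w" using True by (auto simp: p_def)
  have "Gr k (D0 t x)" using D0_H[OF xH] kp P_mem by (simp add: Gr_def)
  moreover have "Gr (k + 1) (Dp t x)"
  proof (cases "Suc p < w")
    case True
    have e: "nat (int p + 1) = Suc p" by arith
    then show ?thesis using Dp_H[OF xH] kp P_mem True by (simp add: Gr_def)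
  next
    case False then show ?thesis using Dp_H[OF xH] Gr_zero by simp
  qed
  moreover have "Gr (k - 1) (Dm t x)"
  proof (cases "1 \<le> p")
    case True
    then have "nat (int p - 1) = p - 1" by auto
    then show ?thesis using Dm_H[OF xH] kp P_mem True by (simp add: Gr_def)
  next
    case False then show ?thesis using Dm_H[OF xH] Gr_zero by simp
  qed
  ultimately show ?thesis by blast
next
  case False
  then have "x = 0" using x by (simp add: Gr_def)
  then show ?thesis using lin_zero[OF lin_D0] lin_zero[OF lin_Dp] lin_zero[OF lin_Dm] Gr_zero by simp
qed

lemma split_H:
  assumes t: "t \<in> H 0" and g: "g \<in> H p" and pw: "p < w"
  shows "t * g = Dm t g + (D0 t g + Dp t g)"
proof -
  define A where "A j = (if 1 \<le> p then (if j = p - 1 then P j (t * g) else 0) else 0)" for j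
  define B where "B j = (if j = p then P j (t * g) else 0)" for j
  define C where "C j = (if Suc p < w then (if j = Suc p then P j (t * g) else 0) else 0)" for j
  have pt: "P j (t * g) = A j + (B j + C j)" if "j \<le> w" for j
  proof -
    consider "j = p" | "Suc j = p" | "j = Suc p" | "Suc (Suc j) \<le> p" | "Suc (Suc p) \<le> j" by linarith
    then show ?thesis
    proof cases
      case 1 then show ?thesis by (auto simp: A_def B_def C_def)
    next
      case 2 then show ?thesis by (auto simp: A_def B_def C_def)
    next
      case 3
      show ?thesis
      proof (cases "Suc p < w")
        case True then show ?thesis using 3 by (auto simp: A_def B_def C_def)
      next
        case False
        then have "j = w" using 3 that pw by simp
        then have "P j (t * g) = 0" using band_w[OF t g pw] by simp
        then show ?thesis using 3 by (auto simp: A_def B_def C_def)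
      qed
    next
      case 4
      then have "P j (t * g) = 0" using band_lo[OF t g pw] by simp
      then show ?thesis using 4 by (auto simp: A_def B_def C_def)
    next
      case 5
      then have "P j (t * g) = 0" using band_hi[OF t g pw] by simp
      then show ?thesis using 5 by (auto simp: A_def B_def C_def)
    qed
  qed
  have "t * g = (\<Sum>j\<le>w. P j (t * g))" by (rule P_sum)
  also have "\<dots> = (\<Sum>j\<le>w. A j + (B j + C j))" by (rule sum.cong[OF refl]) (simp add: pt)
  also have "\<dots> = (\<Sum>j\<le>w. A j) + ((\<Sum>j\<le>w. B j) + (\<Sum>j\<le>w. C j))" by (simp add: sum.distrib)
  also have "(\<Sum>j\<le>w. A j) = Dm t g"
    unfolding Dm_H[OF g] A_def using pw by (cases "1 \<le> p") auto
  also have "(\<Sum>j\<le>w. B j) = D0 t g"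
    unfolding D0_H[OF g] B_def using pw by simp
  also have "(\<Sum>j\<le>w. C j) = Dp t g"
    unfolding Dp_H[OF g] C_def using pw by (cases "Suc p < w") simp_all
  finally show ?thesis .
qed

lemma split_V:
  assumes t: "t \<in> H 0" and f: "f \<in> V w"
  shows "t * f = Dm t f + (D0 t f + Dp t f)"
proof -
  have L: "lin (\<lambda>f. t * f - (Dm t f + (D0 t f + Dp t f)))"
    by (intro lin_minus lin_plus lin_mult lin_D0 lin_Dp lin_Dm)
  have "t * f - (Dm t f + (D0 t f + Dp t f)) = 0"
    by (rule lin_ext[OF L _ f]) (simp add: split_H[OF t])
  then show ?thesis by simp
qed

end


context polz
begin

lemma Gr_eqk: "Gr l x \<Longrightarrow> l = m \<Longrightarrow> Gr m x" by simp

lemma sep5: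
  assumes ga: "Gr (k - 2) a" and gb: "Gr (k - 1) b" and gc: "Gr k c" and gd: "Gr (k + 1) d"
    and ge: "Gr (k + 2) e" and s: "a + b + c + d + e = 0"
  shows "a = 0 \<and> b = 0 \<and> c = 0 \<and> d = 0 \<and> e = 0"
proof -
  have PS: "P j a + P j b + P j c + P j d + P j e = 0" for j
  proof -
    have "P j (a + b + c + d + e) = 0" using s P_zero by simp
    then show ?thesis by (simp only: P_add)
  qed
  note G = Gr_P[OF ga] Gr_P[OF gb] Gr_P[OF gc] Gr_P[OF gd] Gr_P[OF ge]
  have "a = 0"
  proof (rule Gr_zero_if[OF ga])
    fix j assume "int j = k - 2"
    then show "a = 0" using PS[of j] by (simp add: G)
  qed
  moreover have "b = 0"
  proof (rule Gr_zero_if[OF gb])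
    fix j assume "int j = k - 1"
    then show "b = 0" using PS[of j] by (simp add: G)
  qed
  moreover have "c = 0"
  proof (rule Gr_zero_if[OF gc])
    fix j assume "int j = k"
    then show "c = 0" using PS[of j] by (simp add: G)
  qed
  moreover have "d = 0"
  proof (rule Gr_zero_if[OF gd])
    fix j assume "int j = k + 1"
    then show "d = 0" using PS[of j] by (simp add: G)
  qed
  moreover have "e = 0"
  proof (rule Gr_zero_if[OF ge])
    fix j assume "int j = k + 2"
    then show "e = 0" using PS[of j] by (simp add: G)
  qed
  ultimately show ?thesis by blast
qed

lemma rel_H:
  assumes t: "t \<in> H 0" and t': "t' \<in> H 0" and f: "f \<in> H p" and pw: "p < w"
  shows "Dp t (Dp t' f) - Dp t' (Dp t f) = 0 \<and> Dm t (Dm t' f) - Dm t' (Dm t f) = 0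
     \<and> (D0 t (Dp t' f) + Dp t (D0 t' f)) - (D0 t' (Dp t f) + Dp t' (D0 t f)) = 0
     \<and> (D0 t (Dm t' f) + Dm t (D0 t' f)) - (D0 t' (Dm t f) + Dm t' (D0 t f)) = 0
     \<and> (D0 t (D0 t' f) - D0 t' (D0 t f)) + ((Dp t (Dm t' f) - Dp t' (Dm t f))
          + (Dm t (Dp t' f) - Dm t' (Dp t f))) = 0"
proof -
  define k where "k = int p"
  have Gf: "Gr k f" using Gr_H[OF pw f] k_def by simp
  note s1 = Gr_shift[OF t' Gf] and s1' = Gr_shift[OF t Gf]
  note s2a = Gr_shift[OF t conjunct1[OF s1]] and s2b = Gr_shift[OF t conjunct1[OF conjunct2[OF s1]]]
    and s2c = Gr_shift[OF t conjunct2[OF conjunct2[OF s1]]]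
  note s2a' = Gr_shift[OF t' conjunct1[OF s1']] and s2b' = Gr_shift[OF t' conjunct1[OF conjunct2[OF s1']]]
    and s2c' = Gr_shift[OF t' conjunct2[OF conjunct2[OF s1']]]
  have VV: "Dm t' f \<in> V w" "D0 t' f \<in> V w" "Dp t' f \<in> V w" "Dm t f \<in> V w" "D0 t f \<in> V w" "Dp t f \<in> V w"
    using Dm_V D0_V Dp_V by blast+
  have fV: "f \<in> V w" by (rule Gr_V[OF Gf])
  have X: "t * (t' * f) = (Dm t (Dm t' f) + (D0 t (Dm t' f) + Dp t (Dm t' f)))
      + ((Dm t (D0 t' f) + (D0 t (D0 t' f) + Dp t (D0 t' f)))
      + (Dm t (Dp t' f) + (D0 t (Dp t' f) + Dp t (Dp t' f))))"
    using split_V[OF t' fV] split_V[OF t VV(1)] split_V[OF t VV(2)] split_V[OF t VV(3)]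
    by (simp add: distrib_left)
  have Y: "t' * (t * f) = (Dm t' (Dm t f) + (D0 t' (Dm t f) + Dp t' (Dm t f)))
      + ((Dm t' (D0 t f) + (D0 t' (D0 t f) + Dp t' (D0 t f)))
      + (Dm t' (Dp t f) + (D0 t' (Dp t f) + Dp t' (Dp t f))))"
    using split_V[OF t fV] split_V[OF t' VV(4)] split_V[OF t' VV(5)] split_V[OF t' VV(6)]
    by (simp add: distrib_left)
  have comm: "t * (t' * f) = t' * (t * f)" by (simp add: mult_ac)
  define a where "a = Dm t (Dm t' f) - Dm t' (Dm t f)"
  define b where "b = (D0 t (Dm t' f) + Dm t (D0 t' f)) - (D0 t' (Dm t f) + Dm t' (D0 t f))"
  define c where "c = (D0 t (D0 t' f) - D0 t' (D0 t f)) + ((Dp t (Dm t' f) - Dp t' (Dm t f))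
          + (Dm t (Dp t' f) - Dm t' (Dp t f)))"
  define d where "d = (D0 t (Dp t' f) + Dp t (D0 t' f)) - (D0 t' (Dp t f) + Dp t' (D0 t f))"
  define e where "e = Dp t (Dp t' f) - Dp t' (Dp t f)"
  have "a + b + c + d + e = t * (t' * f) - t' * (t * f)"
    unfolding X Y a_def b_def c_def d_def e_def by (simp add: algebra_simps)
  then have sum0: "a + b + c + d + e = 0" using comm by simp
  have ga: "Gr (k - 2) a" unfolding a_def
    by (rule Gr_diff; rule Gr_eqk) (use s2a s2a' s2b s2b' s2c s2c' in auto)
  have gb: "Gr (k - 1) b" unfolding b_def
    by (intro Gr_diff Gr_add; rule Gr_eqk) (use s2a s2a' s2b s2b' s2c s2c' in auto)
  have gc: "Gr k c" unfolding c_def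
    by (intro Gr_diff Gr_add; rule Gr_eqk) (use s2a s2a' s2b s2b' s2c s2c' in auto)
  have gd: "Gr (k + 1) d" unfolding d_def
    by (intro Gr_diff Gr_add; rule Gr_eqk) (use s2a s2a' s2b s2b' s2c s2c' in auto)
  have ge: "Gr (k + 2) e" unfolding e_def
    by (rule Gr_diff; rule Gr_eqk) (use s2a s2a' s2b s2b' s2c s2c' in \<open>auto simp: add.commute\<close>)
  have "a = 0 \<and> b = 0 \<and> c = 0 \<and> d = 0 \<and> e = 0" by (rule sep5[OF ga gb gc gd ge sum0])
  then show ?thesis unfolding a_def b_def c_def d_def e_def by blast
qed

lemma rel_V:
  assumes t: "t \<in> H 0" and t': "t' \<in> H 0" and f: "f \<in> V w"
  shows "Dp t (Dp t' f) = Dp t' (Dp t f) \<and> Dm t (Dm t' f) = Dm t' (Dm t f)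
     \<and> D0 t (Dp t' f) + Dp t (D0 t' f) = D0 t' (Dp t f) + Dp t' (D0 t f)
     \<and> D0 t (Dm t' f) + Dm t (D0 t' f) = D0 t' (Dm t f) + Dm t' (D0 t f)
     \<and> (D0 t (D0 t' f) - D0 t' (D0 t f)) + ((Dp t (Dm t' f) - Dp t' (Dm t f))
          + (Dm t (Dp t' f) - Dm t' (Dp t f))) = 0"
proof -
  note RH = rel_H[OF t t']
  have r1: "Dp t (Dp t' f) - Dp t' (Dp t f) = 0"
    by (rule lin_ext[OF lin_minus[OF lin_comp[OF lin_Dp lin_Dp] lin_comp[OF lin_Dp lin_Dp]] _ f])
      (use RH in blast)
  have r2: "Dm t (Dm t' f) - Dm t' (Dm t f) = 0"
    by (rule lin_ext[OF lin_minus[OF lin_comp[OF lin_Dm lin_Dm] lin_comp[OF lin_Dm lin_Dm]] _ f])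
      (use RH in blast)
  have r3: "(D0 t (Dp t' f) + Dp t (D0 t' f)) - (D0 t' (Dp t f) + Dp t' (D0 t f)) = 0"
    by (rule lin_ext[OF lin_minus[OF lin_plus[OF lin_comp[OF lin_D0 lin_Dp] lin_comp[OF lin_Dp lin_D0]]
          lin_plus[OF lin_comp[OF lin_D0 lin_Dp] lin_comp[OF lin_Dp lin_D0]]] _ f])
      (use RH in blast)
  have r4: "(D0 t (Dm t' f) + Dm t (D0 t' f)) - (D0 t' (Dm t f) + Dm t' (D0 t f)) = 0"
    by (rule lin_ext[OF lin_minus[OF lin_plus[OF lin_comp[OF lin_D0 lin_Dm] lin_comp[OF lin_Dm lin_D0]]
          lin_plus[OF lin_comp[OF lin_D0 lin_Dm] lin_comp[OF lin_Dm lin_D0]]] _ f])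
      (use RH in blast)
  have r5: "(D0 t (D0 t' f) - D0 t' (D0 t f)) + ((Dp t (Dm t' f) - Dp t' (Dm t f))
          + (Dm t (Dp t' f) - Dm t' (Dp t f))) = 0"
    by (rule lin_ext[OF lin_plus[OF lin_minus[OF lin_comp[OF lin_D0 lin_D0] lin_comp[OF lin_D0 lin_D0]]
          lin_plus[OF lin_minus[OF lin_comp[OF lin_Dp lin_Dm] lin_comp[OF lin_Dp lin_Dm]]
                      lin_minus[OF lin_comp[OF lin_Dm lin_Dp] lin_comp[OF lin_Dm lin_Dp]]]] _ f])
      (use RH in blast)
  show ?thesis using r1 r2 r3 r4 r5 by simp
qed

lemma main:
  "(\<forall>t\<in>H 0. \<forall>f\<in>(V w).
        D0 t f \<in> (V w) \<and> Dp t f \<in> (V w) \<and> Dm t f \<in> (V w)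
      \<and> fmul t f = fadd (Dm t f) (fadd (D0 t f) (Dp t f)))
   \<and> (\<forall>t\<in>H 0. \<forall>p<w. \<forall>f\<in>H p.
        D0 t f \<in> H p
      \<and> (Suc p < w \<longrightarrow> Dp t f \<in> H (Suc p)) \<and> (Suc p = w \<longrightarrow> Dp t f = (\<lambda>x. 0))
      \<and> (0 < p \<longrightarrow> Dm t f \<in> H (p - 1)) \<and> (p = 0 \<longrightarrow> Dm t f = (\<lambda>x. 0)))
   \<and> (\<forall>t\<in>H 0. \<forall>t'\<in>H 0. \<forall>f\<in>(V w).
        Dp t (Dp t' f) = Dp t' (Dp t f)
      \<and> Dm t (Dm t' f) = Dm t' (Dm t f)
      \<and> fadd (D0 t (Dp t' f)) (Dp t (D0 t' f)) = fadd (D0 t' (Dp t f)) (Dp t' (D0 t f))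
      \<and> fadd (D0 t (Dm t' f)) (Dm t (D0 t' f)) = fadd (D0 t' (Dm t f)) (Dm t' (D0 t f))
      \<and> fadd (fsub (D0 t (D0 t' f)) (D0 t' (D0 t f)))
          (fadd (fsub (Dp t (Dm t' f)) (Dp t' (Dm t f)))
                (fsub (Dm t (Dp t' f)) (Dm t' (Dp t f)))) = (\<lambda>x. 0))"
  unfolding fadd_eq fsub_eq fmul_eq zero_fun_lam
proof (intro conjI)
  show "\<forall>t\<in>H 0. \<forall>f\<in>V w. D0 t f \<in> V w \<and> Dp t f \<in> V w \<and> Dm t f \<in> V w
      \<and> t * f = Dm t f + (D0 t f + Dp t f)"
    using split_V D0_V Dp_V Dm_V by blast
next
  show "\<forall>t\<in>H 0. \<forall>p<w. \<forall>f\<in>H p.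
        D0 t f \<in> H p
      \<and> (Suc p < w \<longrightarrow> Dp t f \<in> H (Suc p)) \<and> (Suc p = w \<longrightarrow> Dp t f = 0)
      \<and> (0 < p \<longrightarrow> Dm t f \<in> H (p - 1)) \<and> (p = 0 \<longrightarrow> Dm t f = 0)"
    using D0_H Dp_H Dm_H P_mem by auto
next
  show "\<forall>t\<in>H 0. \<forall>t'\<in>H 0. \<forall>f\<in>V w.
        Dp t (Dp t' f) = Dp t' (Dp t f)
      \<and> Dm t (Dm t' f) = Dm t' (Dm t f)
      \<and> D0 t (Dp t' f) + Dp t (D0 t' f) = D0 t' (Dp t f) + Dp t' (D0 t f)
      \<and> D0 t (Dm t' f) + Dm t (D0 t' f) = D0 t' (Dm t f) + Dm t' (D0 t f)
      \<and> (D0 t (D0 t' f) - D0 t' (D0 t f)) + ((Dp t (Dm t' f) - Dp t' (Dm t f))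
          + (Dm t (Dp t' f) - Dm t' (Dp t f))) = 0"
    using rel_V by blast
qed

end

theorem theorem0p3:
  fixes E :: "('z::finite \<Rightarrow> complex) set" and \<alpha> :: "'z \<Rightarrow> complex"
  assumes "is_subspace E"
      and "polarizing E \<alpha>"
  defines "w \<equiv> wE E \<alpha>"
      and "Vw \<equiv> VE E \<alpha> (wE E \<alpha>)"
      and "H \<equiv> Hsp E \<alpha>"
      and "D0 \<equiv> Dzero E \<alpha>" and "Dp \<equiv> Dplus E \<alpha>" and "Dm \<equiv> Dminus E \<alpha>"
  shows
    "(\<forall>t\<in>H 0. \<forall>f\<in>Vw.
        D0 t f \<in> Vw \<and> Dp t f \<in> Vw \<and> Dm t f \<in> Vw
      \<and> fmul t f = fadd (Dm t f) (fadd (D0 t f) (Dp t f)))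
   \<and> (\<forall>t\<in>H 0. \<forall>p<w. \<forall>f\<in>H p.
        D0 t f \<in> H p
      \<and> (Suc p < w \<longrightarrow> Dp t f \<in> H (Suc p)) \<and> (Suc p = w \<longrightarrow> Dp t f = (\<lambda>x. 0))
      \<and> (0 < p \<longrightarrow> Dm t f \<in> H (p - 1)) \<and> (p = 0 \<longrightarrow> Dm t f = (\<lambda>x. 0)))
   \<and> (\<forall>t\<in>H 0. \<forall>t'\<in>H 0. \<forall>f\<in>Vw.
        Dp t (Dp t' f) = Dp t' (Dp t f)
      \<and> Dm t (Dm t' f) = Dm t' (Dm t f)
      \<and> fadd (D0 t (Dp t' f)) (Dp t (D0 t' f)) = fadd (D0 t' (Dp t f)) (Dp t' (D0 t f))
      \<and> fadd (D0 t (Dm t' f)) (Dm t (D0 t' f)) = fadd (D0 t' (Dm t f)) (Dm t' (D0 t f))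
      \<and> fadd (fsub (D0 t (D0 t' f)) (D0 t' (D0 t f)))
          (fadd (fsub (Dp t (Dm t' f)) (Dp t' (Dm t f)))
                (fsub (Dm t (Dp t' f)) (Dm t' (Dp t f)))) = (\<lambda>x. 0))"
  unfolding w_def Vw_def H_def D0_def Dp_def Dm_def
  by (rule polz.main) (rule polz.intro; rule assms)

end
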